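(* (a) For any finite $d$--regular graph $G$ there exists a sequence of graphs $(G_i)_{i\geq0}$ with $G_0=G$, $G_i$ a $2$-lift of $G_{i-1}$ for $i\geq1$, such that $(G_i)$ Benjamini--Schramm converges to the infinite $d$--regular tree $\mathbb{T}_d$. (b) For any finite $(a,b)$--biregular bipartite graph $G$ there exists a sequence of graphs $(G_i)_{i\geq0}$ with $G_0=G$, $G_i$ a $2$-lift of $G_{i-1}$ for $i\geq1$, such that $(G_i)$ Benjamini--Schramm converges to the infinite $(a,b)$--biregular tree $\mathbb{T}_{a,b}$.
   Context: A graph $H$ is a $2$-lift of $G$ if $V(H)=V(G)\times\{0,1\}$ and for every edge $(u,v)\in E(G)$ exactly one of: $((u,0),(v,0)),((u,1),(v,1))\in E(H)$, or $((u,0),(v,1)),((u,1),(v,0))\in E(H)$; non-edges of $G$ give no edges in $H$. An $(a,b)$--biregular bipartite graph has bipartition $(A,B)$ with all vertices of $A$ of degree $a$ and all of $B$ of degree $b$. A sequence of finite $d$--regular graphs $(G_i)$ Benjamini--Schramm converges to $\mathbb{T}_d$ if for every $r\geq1$ the proportion of vertices $v$ of $G_i$ whose radius-$r$ ball, as a rooted graph, is isomorphic to the radius-$r$ ball of $\mathbb{T}_d$ tends to $1$. A sequence of finite $(a,b)$--biregular bipartite graphs Benjamini--Schramm converges to $\mathbb{T}_{a,b}$ (the random rooted tree which is $\mathbb{T}_{a,b}$ rooted at a vertex of degree $b$ with probability $\frac{a}{a+b}$ and at a vertex of degree $a$ with probability $\frac{b}{a+b}$) if for every $r\geq1$ the proportion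 of vertices $v$ of $G_i$ whose radius-$r$ ball is isomorphic, as a rooted graph, to the radius-$r$ ball of $\mathbb{T}_{a,b}$ around a vertex of the same degree as $v$ tends to $1$. *)

theory Defs
  imports Complex_Main
begin

definition simple_graph :: "'v set \<Rightarrow> 'v set set \<Rightarrow> bool" where
  "simple_graph V E \<longleftrightarrow> finite V \<and>
     (\<forall>e\<in>E. \<exists>u v. u \<in> V \<and> v \<in> V \<and> u \<noteq> v \<and> e = {u, v})"

definition degree :: "'v set set \<Rightarrow> 'v \<Rightarrow> nat" where
  "degree E v = card {e \<in> E. v \<in> e}"

definition regular_graph :: "'v set \<Rightarrow> 'v set set \<Rightarrow> nat \<Rightarrow> bool" where
  "regular_graph V E d \<longleftrightarrow> simple_graph V E \<and> (\<forall>v\<in>V. degree E v = d)"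

definition biregular_bipartite :: "'v set \<Rightarrow> 'v set set \<Rightarrow> nat \<Rightarrow> nat \<Rightarrow> bool" where
  "biregular_bipartite V E a b \<longleftrightarrow> simple_graph V E \<and>
     (\<exists>A B. A \<union> B = V \<and> A \<inter> B = {} \<and>
        (\<forall>e\<in>E. \<exists>u\<in>A. \<exists>w\<in>B. e = {u, w}) \<and>
        (\<forall>v\<in>A. degree E v = a) \<and> (\<forall>v\<in>B. degree E v = b))"

definition two_lift :: "'v set \<Rightarrow> 'v set set \<Rightarrow> ('v \<times> bool) set set \<Rightarrow> bool" where
  "two_lift V E H \<longleftrightarrow>
     H \<subseteq> {{(u, i), (v, j)} | u v i j. {u, v} \<in> E} \<and>
     (\<forall>u v. {u, v} \<in> E \<longrightarrow>
        (let par = {{(u, False), (v, False)}, {(u, True), (v, True)}};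
             crs = {{(u, False), (v, True)}, {(u, True), (v, False)}}
         in (par \<subseteq> H \<and> crs \<inter> H = {}) \<or> (crs \<subseteq> H \<and> par \<inter> H = {})))"

(* encoding of V(G_i) \<times> {0,1} into the common vertex type 'a \<times> bool list *)
definition enc :: "('a \<times> bool list) \<times> bool \<Rightarrow> 'a \<times> bool list" where
  "enc x = (fst (fst x), snd x # snd (fst x))"

definition lift_step :: "('a \<times> bool list) set \<Rightarrow> ('a \<times> bool list) set set
     \<Rightarrow> ('a \<times> bool list) set \<Rightarrow> ('a \<times> bool list) set set \<Rightarrow> bool" where
  "lift_step V E V' E' \<longleftrightarrow> V' = enc ` (V \<times> UNIV) \<and>
     (\<exists>H. two_lift V E H \<and> E' = (\<lambda>e. enc ` e) ` H)"

fun ball_verts :: "'v set set \<Rightarrow> 'v \<Rightarrow> nat \<Rightarrow> 'v set" where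
  "ball_verts E v 0 = {v}"
| "ball_verts E v (Suc r) = ball_verts E v r \<union> {y. \<exists>x\<in>ball_verts E v r. {x, y} \<in> E}"

definition ball_edges :: "'v set set \<Rightarrow> 'v \<Rightarrow> nat \<Rightarrow> 'v set set" where
  "ball_edges E v r = {e \<in> E. e \<subseteq> ball_verts E v r}"

definition rooted_iso :: "'v set \<Rightarrow> 'v set set \<Rightarrow> 'v \<Rightarrow> 'w set \<Rightarrow> 'w set set \<Rightarrow> 'w \<Rightarrow> bool" where
  "rooted_iso V1 E1 r1 V2 E2 r2 \<longleftrightarrow> (\<exists>f. bij_betw f V1 V2 \<and> f r1 = r2 \<and>
     (\<forall>x\<in>V1. \<forall>y\<in>V1. {x, y} \<in> E1 \<longleftrightarrow> {f x, f y} \<in> E2))"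

(* Infinite tree rooted at a vertex of degree p, whose vertices alternate degrees
   p (even depth) and q (odd depth). Vertices: words; parent of w@[c] is w; root [].
   T_d = tree_edges d d; T_{a,b} rooted at a degree-a vertex = tree_edges a b. *)
definition tree_word :: "nat \<Rightarrow> nat \<Rightarrow> nat list \<Rightarrow> bool" where
  "tree_word p q w \<longleftrightarrow> (\<forall>i<length w.
      w ! i < (if i = 0 then p else if odd i then q - 1 else p - 1))"

definition tree_edges :: "nat \<Rightarrow> nat \<Rightarrow> nat list set set" where
  "tree_edges p q = {{w, w @ [c]} | w c. tree_word p q (w @ [c])}"

definition ball_iso_tree :: "'v set set \<Rightarrow> 'v \<Rightarrow> nat \<Rightarrow> nat \<Rightarrow> nat \<Rightarrow> bool" where
  "ball_iso_tree E v r p q \<longleftrightarrow>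
     rooted_iso (ball_verts E v r) (ball_edges E v r) v
                (ball_verts (tree_edges p q) [] r) (ball_edges (tree_edges p q) [] r) []"

definition BS_conv_regular :: "(nat \<Rightarrow> 'v set) \<Rightarrow> (nat \<Rightarrow> 'v set set) \<Rightarrow> nat \<Rightarrow> bool" where
  "BS_conv_regular Vs Es d \<longleftrightarrow> (\<forall>r\<ge>1.
     (\<lambda>i. real (card {v \<in> Vs i. ball_iso_tree (Es i) v r d d}) / real (card (Vs i)))
       \<longlonglongrightarrow> 1)"

definition BS_conv_biregular :: "(nat \<Rightarrow> 'v set) \<Rightarrow> (nat \<Rightarrow> 'v set set) \<Rightarrow> nat \<Rightarrow> nat \<Rightarrow> bool" where
  "BS_conv_biregular Vs Es a b \<longleftrightarrow> (\<forall>r\<ge>1.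
     (\<lambda>i. real (card {v \<in> Vs i.
             (degree (Es i) v = a \<and> ball_iso_tree (Es i) v r a b) \<or>
             (degree (Es i) v = b \<and> ball_iso_tree (Es i) v r b a)}) / real (card (Vs i)))
       \<longlonglongrightarrow> 1)"

definition lift_sequence :: "'a set \<Rightarrow> 'a set set \<Rightarrow> (nat \<Rightarrow> ('a \<times> bool list) set)
     \<Rightarrow> (nat \<Rightarrow> ('a \<times> bool list) set set) \<Rightarrow> bool" where
  "lift_sequence V E Vs Es \<longleftrightarrow>
     Vs 0 = (\<lambda>v. (v, [])) ` V \<and> Es 0 = (\<lambda>e. (\<lambda>v. (v, [])) ` e) ` E \<and>
     (\<forall>i. lift_step (Vs i) (Es i) (Vs (Suc i)) (Es (Suc i)))"

end

theory Submission
  imports Defs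
begin
definition nbr :: "'v set set \<Rightarrow> 'v \<Rightarrow> 'v set" where
  "nbr E x = {y. {x,y} \<in> E}"

lemma sg_edge:
  assumes "simple_graph V E" "{x,y} \<in> E"
  shows "x \<in> V \<and> y \<in> V \<and> x \<noteq> y"
proof -
  obtain u w where "u \<in> V" "w \<in> V" "u \<noteq> w" "{x,y} = {u,w}"
    using assms unfolding simple_graph_def by blast
  then show ?thesis by (auto simp: doubleton_eq_iff)
qed

lemma sg_nbr_sub: "simple_graph V E \<Longrightarrow> nbr E x \<subseteq> V"
  using sg_edge[of V E x] unfolding nbr_def by blast

lemma sg_fin: "simple_graph V E \<Longrightarrow> finite V"
  unfolding simple_graph_def by blast

lemma sg_nbr_fin: "simple_graph V E \<Longrightarrow> finite (nbr E x)"
  using sg_nbr_sub sg_fin finite_subset by metis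

lemma degree_nbr:
  assumes "simple_graph V E"
  shows "degree E x = card (nbr E x)"
proof -
  have "bij_betw (\<lambda>y. {x,y}) (nbr E x) {e\<in>E. x\<in>e}"
  proof (rule bij_betwI')
    fix y z assume "y \<in> nbr E x" "z \<in> nbr E x"
    then show "({x, y} = {x, z}) = (y = z)"
      using sg_edge[OF assms] unfolding nbr_def by (auto simp: doubleton_eq_iff)
  next
    fix y assume "y \<in> nbr E x" then show "{x,y} \<in> {e\<in>E. x\<in>e}" unfolding nbr_def by auto
  next
    fix e assume "e \<in> {e\<in>E. x\<in>e}"
    then obtain u w where "e \<in> E" "x \<in> e" "e = {u,w}"
      using assms unfolding simple_graph_def by blast
    then show "\<exists>y\<in>nbr E x. e = {x, y}" unfolding nbr_def
      by (auto simp: insert_commute)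
  qed
  then show ?thesis unfolding degree_def by (simp add: bij_betw_same_card)
qed

definition walk :: "'v set set \<Rightarrow> 'v list \<Rightarrow> bool" where
  "walk E xs = (\<forall>k. Suc k < length xs \<longrightarrow> {xs!k, xs!Suc k} \<in> E)"

definition nbk :: "'v list \<Rightarrow> bool" where
  "nbk xs = (\<forall>k. Suc (Suc k) < length xs \<longrightarrow> xs!k \<noteq> xs!Suc (Suc k))"

definition CW :: "'v set \<Rightarrow> 'v set set \<Rightarrow> nat \<Rightarrow> 'v list set" where
  "CW V E l = {xs. length xs = Suc l \<and> set xs \<subseteq> V \<and> walk E xs \<and> nbk xs \<and> xs!0 = xs!l}"

definition noshort :: "'v set \<Rightarrow> 'v set set \<Rightarrow> nat \<Rightarrow> bool" where
  "noshort V E L = (\<forall>l. 1 \<le> l \<longrightarrow> l \<le> L \<longrightarrow> CW V E l = {})"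

definition bnd :: "nat \<Rightarrow> nat \<Rightarrow> nat \<Rightarrow> nat" where
  "bnd p q k = (if k = 0 then p else if odd k then q - 1 else p - 1)"

lemma tw_Nil[simp]: "tree_word p q []"
  unfolding tree_word_def by simp

lemma tw_def': "tree_word p q w \<longleftrightarrow> (\<forall>i<length w. w ! i < bnd p q i)"
  unfolding tree_word_def bnd_def by simp

lemma tw_snoc: "tree_word p q (w @ [c]) \<longleftrightarrow> tree_word p q w \<and> c < bnd p q (length w)"
proof -
  have "tree_word p q (w @ [c]) \<longleftrightarrow> (\<forall>i<length w. (w@[c]) ! i < bnd p q i) \<and> (w@[c]) ! length w < bnd p q (length w)"
    unfolding tw_def' by (simp add: All_less_Suc conj_commute)
  also have "(\<forall>i<length w. (w@[c]) ! i < bnd p q i) \<longleftrightarrow> tree_word p q w"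
    unfolding tw_def' by (simp add: nth_append)
  finally show ?thesis by simp
qed

lemma tw_append: "tree_word p q (w @ w') \<Longrightarrow> tree_word p q w"
  unfolding tree_word_def
proof (intro allI impI)
  fix i assume a: "\<forall>i<length (w @ w'). (w @ w') ! i < (if i = 0 then p else if odd i then q - 1 else p - 1)"
    and i: "i < length w"
  then show "w ! i < (if i = 0 then p else if odd i then q - 1 else p - 1)"
    using a[rule_format, of i] by (simp add: nth_append)
qed

lemma TE_iff: "{x,y} \<in> tree_edges p q \<longleftrightarrow>
   (\<exists>c. y = x @ [c] \<and> tree_word p q y) \<or> (\<exists>c. x = y @ [c] \<and> tree_word p q x)"
  unfolding tree_edges_def by (auto simp: doubleton_eq_iff)

lemma TB: "ball_verts (tree_edges p q) [] r = {w. tree_word p q w \<and> length w \<le> r}"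
proof (induction r)
  case 0 then show ?case by auto
next
  case (Suc r)
  show ?case
  proof
    show "ball_verts (tree_edges p q) [] (Suc r) \<subseteq> {w. tree_word p q w \<and> length w \<le> Suc r}"
    proof
      fix y assume "y \<in> ball_verts (tree_edges p q) [] (Suc r)"
      then consider "y \<in> ball_verts (tree_edges p q) [] r"
        | x where "x \<in> ball_verts (tree_edges p q) [] r" "{x,y} \<in> tree_edges p q" by auto
      then show "y \<in> {w. tree_word p q w \<and> length w \<le> Suc r}"
      proof cases
        case 1 then show ?thesis using Suc by auto
      next
        case 2
        then have x: "tree_word p q x" "length x \<le> r" using Suc by auto
        from 2(2) show ?thesis unfolding TE_iff
        proof (elim disjE exE conjE)
          fix c assume "y = x @ [c]" "tree_word p q y" then show ?thesis using x by auto
        next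
          fix c assume "x = y @ [c]" then show ?thesis using x tw_append[of p q y "[c]"] by auto
        qed
      qed
    qed
  next
    show "{w. tree_word p q w \<and> length w \<le> Suc r} \<subseteq> ball_verts (tree_edges p q) [] (Suc r)"
    proof
      fix w assume w: "w \<in> {w. tree_word p q w \<and> length w \<le> Suc r}"
      show "w \<in> ball_verts (tree_edges p q) [] (Suc r)"
      proof (cases "length w \<le> r")
        case True then show ?thesis using Suc w by auto
      next
        case False
        then obtain u c where u: "w = u @ [c]" by (metis le0 rev_exhaust list.size(3))
        then have "u \<in> ball_verts (tree_edges p q) [] r" using Suc w False u tw_append by auto
        moreover have "{u, w} \<in> tree_edges p q" using u w by (auto simp: TE_iff)
        ultimately show ?thesis by auto
      qed
    qed
  qed
qed

definition nbl :: "'v set set \<Rightarrow> 'v \<Rightarrow> 'v list" where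
  "nbl E x = (SOME xs. distinct xs \<and> set xs = nbr E x)"

lemma nbl: "finite (nbr E x) \<Longrightarrow> distinct (nbl E x) \<and> set (nbl E x) = nbr E x"
  unfolding nbl_def by (rule someI_ex) (metis finite_distinct_list)

definition chl :: "'v set set \<Rightarrow> 'v \<Rightarrow> 'v option \<Rightarrow> 'v list" where
  "chl E x po = (case po of None \<Rightarrow> nbl E x | Some y \<Rightarrow> filter (\<lambda>z. z \<noteq> y) (nbl E x))"

fun Phi :: "'v set set \<Rightarrow> 'v \<Rightarrow> nat list \<Rightarrow> 'v \<times> 'v option" where
  "Phi E v [] = (v, None)"
| "Phi E v (c # rw) = (chl E (fst (Phi E v rw)) (snd (Phi E v rw)) ! c, Some (fst (Phi E v rw)))"

definition phi :: "'v set set \<Rightarrow> 'v \<Rightarrow> nat list \<Rightarrow> 'v" where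
  "phi E v w = fst (Phi E v (rev w))"

lemma phi_Nil[simp]: "phi E v [] = v"
  unfolding phi_def by simp

lemma Phi_snd: "snd (Phi E v (rev w)) = (if w = [] then None else Some (phi E v (butlast w)))"
  by (cases w rule: rev_exhaust) (auto simp: phi_def)

lemma phi_snoc: "phi E v (w @ [c]) = chl E (phi E v w) (if w = [] then None else Some (phi E v (butlast w))) ! c"
  using Phi_snd[of E v w] by (simp add: phi_def)

lemma nbr_sym: "y \<in> nbr E x \<longleftrightarrow> x \<in> nbr E y"
  unfolding nbr_def by (simp add: insert_commute)

definition TN :: "nat list \<Rightarrow> nat list \<Rightarrow> bool" where
  "TN x y \<longleftrightarrow> (\<exists>c. y = x @ [c]) \<or> (\<exists>c. x = y @ [c])"

locale tloc =
  fixes V :: "'v set" and E :: "'v set set" and P Q :: "'v set" and p q :: nat and v :: 'v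
  assumes sg: "simple_graph V E"
    and Pd: "\<And>x. x \<in> P \<Longrightarrow> card (nbr E x) = p \<and> nbr E x \<subseteq> Q"
    and Qd: "\<And>x. x \<in> Q \<Longrightarrow> card (nbr E x) = q \<and> nbr E x \<subseteq> P"
    and PV: "P \<subseteq> V" and QV: "Q \<subseteq> V"
    and vP: "v \<in> P"
begin

definition side :: "nat \<Rightarrow> 'v set" where
  "side k = (if even k then P else Q)"

lemma side_nbr: "x \<in> side k \<Longrightarrow> nbr E x \<subseteq> side (Suc k)"
  using Pd[of x] Qd[of x] unfolding side_def by (auto split: if_splits)

lemma side_V: "x \<in> side k \<Longrightarrow> x \<in> V"
  using PV QV unfolding side_def by (auto split: if_splits)

lemma chl_props:
  assumes x: "x \<in> side k" and po: "po = (if k = 0 then None else Some y)"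
    and y: "k > 0 \<Longrightarrow> y \<in> nbr E x"
  shows "distinct (chl E x po) \<and> length (chl E x po) = bnd p q k \<and>
         set (chl E x po) = nbr E x - (if k = 0 then {} else {y})"
proof -
  have fin: "finite (nbr E x)" using sg_nbr_fin[OF sg] .
  note L = nbl[OF fin]
  have cd: "card (nbr E x) = (if even k then p else q)"
    using x Pd Qd unfolding side_def by (auto split: if_splits)
  show ?thesis
  proof (cases "k = 0")
    case True
    then show ?thesis using L cd po by (simp add: chl_def bnd_def distinct_card[symmetric])
  next
    case False
    then have "y \<in> nbr E x" using y by simp
    moreover have "distinct (filter (\<lambda>z. z \<noteq> y) (nbl E x))" using L by simp
    moreover have "set (filter (\<lambda>z. z \<noteq> y) (nbl E x)) = nbr E x - {y}" using L by auto
    ultimately have "length (filter (\<lambda>z. z \<noteq> y) (nbl E x)) = card (nbr E x) - 1"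
      by (metis distinct_card card_Diff_singleton fin)
    then show ?thesis using False L cd po \<open>set (filter _ _) = _\<close> \<open>distinct (filter _ _)\<close>
      by (simp add: chl_def bnd_def)
  qed
qed

abbreviation CH :: "nat list \<Rightarrow> 'v list" where
  "CH w \<equiv> chl E (phi E v w) (if w = [] then None else Some (phi E v (butlast w)))"

lemma inv:
  "tree_word p q w \<Longrightarrow> phi E v w \<in> side (length w) \<and>
     (w \<noteq> [] \<longrightarrow> phi E v (butlast w) \<in> nbr E (phi E v w)) \<and>
     (length w \<ge> 2 \<longrightarrow> phi E v w \<noteq> phi E v (butlast (butlast w)))"
proof (induction w rule: rev_induct)
  case Nil then show ?case using vP by (simp add: side_def)
next
  case (snoc c w)
  then have tw: "tree_word p q w" and c: "c < bnd p q (length w)" by (auto simp: tw_snoc)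
  have IH: "phi E v w \<in> side (length w)" "w \<noteq> [] \<Longrightarrow> phi E v (butlast w) \<in> nbr E (phi E v w)"
    using snoc.IH[OF tw] by auto
  have cp: "distinct (CH w) \<and> length (CH w) = bnd p q (length w) \<and>
      set (CH w) = nbr E (phi E v w) - (if length w = 0 then {} else {phi E v (butlast w)})"
    by (rule chl_props[OF IH(1)]) (use IH(2) in auto)
  have "c < length (CH w)" using cp c by simp
  then have "CH w ! c \<in> set (CH w)" by (rule nth_mem)
  then have z: "phi E v (w @ [c]) \<in> set (CH w)" by (simp add: phi_snoc)
  then have z2: "phi E v (w @ [c]) \<in> nbr E (phi E v w)" "w \<noteq> [] \<Longrightarrow> phi E v (w @ [c]) \<noteq> phi E v (butlast w)"
    using cp by auto
  have "phi E v (w @ [c]) \<in> side (length (w @ [c]))" using side_nbr[OF IH(1)] z2 by auto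
  moreover have "phi E v (butlast (w @ [c])) \<in> nbr E (phi E v (w @ [c]))" using z2(1) nbr_sym[of "phi E v w"] by simp
  moreover have "length (w @ [c]) \<ge> 2 \<longrightarrow> phi E v (w @ [c]) \<noteq> phi E v (butlast (butlast (w @ [c])))"
    using z2 by (cases "w = []") auto
  ultimately show ?case by blast
qed

lemma CH_props: "tree_word p q w \<Longrightarrow> distinct (CH w) \<and> length (CH w) = bnd p q (length w) \<and>
      set (CH w) = nbr E (phi E v w) - (if w = [] then {} else {phi E v (butlast w)})"
  using chl_props[of "phi E v w" "length w" _ "phi E v (butlast w)"] inv[of w] by auto

lemma phi_V: "tree_word p q w \<Longrightarrow> phi E v w \<in> V"
  using inv side_V by blast

lemma phi_edge: "tree_word p q (w @ [c]) \<Longrightarrow> {phi E v w, phi E v (w @ [c])} \<in> E"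
  using inv[of "w @ [c]"] unfolding nbr_def by (simp add: insert_commute)

lemma phi_child_inj:
  assumes "tree_word p q (w @ [c1])" "tree_word p q (w @ [c2])" "phi E v (w @ [c1]) = phi E v (w @ [c2])"
  shows "c1 = c2"
proof -
  have tw: "tree_word p q w" "c1 < bnd p q (length w)" "c2 < bnd p q (length w)"
    using assms by (auto simp: tw_snoc)
  then show ?thesis using CH_props[OF tw(1)] assms(3) by (simp add: phi_snoc nth_eq_iff_index_eq)
qed

lemma phi_surj:
  assumes tw: "tree_word p q w" and y: "y \<in> nbr E (phi E v w)"
  shows "(w \<noteq> [] \<and> y = phi E v (butlast w)) \<or> (\<exists>c. tree_word p q (w @ [c]) \<and> phi E v (w @ [c]) = y)"
proof (cases "w \<noteq> [] \<and> y = phi E v (butlast w)")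
  case True then show ?thesis by blast
next
  case False
  then have "y \<in> set (CH w)" using CH_props[OF tw] y by auto
  then obtain c where "c < length (CH w)" "CH w ! c = y" by (auto simp: in_set_conv_nth)
  then show ?thesis using CH_props[OF tw] tw by (auto simp: tw_snoc phi_snoc)
qed

lemma ball_phi: "ball_verts E v r = phi E v ` {w. tree_word p q w \<and> length w \<le> r}"
proof (induction r)
  case 0 then show ?case by (auto intro!: image_eqI[of _ _ "[]"])
next
  case (Suc r)
  show ?case
  proof
    show "ball_verts E v (Suc r) \<subseteq> phi E v ` {w. tree_word p q w \<and> length w \<le> Suc r}"
    proof
      fix y assume "y \<in> ball_verts E v (Suc r)"
      then consider "y \<in> ball_verts E v r" | x where "x \<in> ball_verts E v r" "{x,y} \<in> E" by auto
      then show "y \<in> phi E v ` {w. tree_word p q w \<and> length w \<le> Suc r}"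
      proof cases
        case 1 then show ?thesis using Suc by auto
      next
        case 2
        then obtain w where w: "tree_word p q w" "length w \<le> r" "x = phi E v w" using Suc by auto
        then have "y \<in> nbr E (phi E v w)" using 2 by (simp add: nbr_def)
        from phi_surj[OF w(1) this] show ?thesis
        proof
          assume "w \<noteq> [] \<and> y = phi E v (butlast w)"
          moreover have "tree_word p q (butlast w)"
            using w(1) tw_append[of p q "butlast w" "[last w]"] calculation by simp
          ultimately show ?thesis using w(2) by (auto intro!: image_eqI[of _ _ "butlast w"])
        next
          assume "\<exists>c. tree_word p q (w @ [c]) \<and> phi E v (w @ [c]) = y"
          then obtain c where "tree_word p q (w @ [c])" "phi E v (w @ [c]) = y" by blast
          then show ?thesis using w(2) by (auto intro!: image_eqI[of _ _ "w @ [c]"])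
        qed
      qed
    qed
  next
    show "phi E v ` {w. tree_word p q w \<and> length w \<le> Suc r} \<subseteq> ball_verts E v (Suc r)"
    proof
      fix y assume "y \<in> phi E v ` {w. tree_word p q w \<and> length w \<le> Suc r}"
      then obtain w where w: "tree_word p q w" "length w \<le> Suc r" "y = phi E v w" by auto
      show "y \<in> ball_verts E v (Suc r)"
      proof (cases "length w \<le> r")
        case True then show ?thesis using Suc w by auto
      next
        case False
        then obtain u c where u: "w = u @ [c]" by (metis le0 rev_exhaust list.size(3))
        then have "phi E v u \<in> ball_verts E v r" using Suc w False tw_append[of p q u "[c]"] by auto
        moreover have "{phi E v u, y} \<in> E" using u w phi_edge by auto
        ultimately show ?thesis by auto
      qed
    qed
  qed
qed

end

lemma lcp: "\<exists>u a b. w1 = u @ a \<and> w2 = u @ b \<and> (a = [] \<or> b = [] \<or> hd a \<noteq> hd b)"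
proof (induction w1 arbitrary: w2)
  case Nil then show ?case by auto
next
  case (Cons x w1)
  show ?case
  proof (cases w2)
    case Nil then show ?thesis by (intro exI[of _ "[]"] exI[of _ "x # w1"]) auto
  next
    case (Cons y w2')
    show ?thesis
    proof (cases "x = y")
      case False then show ?thesis using Cons by (intro exI[of _ "[]"] exI[of _ "x # w1"] exI[of _ w2]) auto
    next
      case True
      obtain u a b where "w1 = u @ a" "w2' = u @ b" "a = [] \<or> b = [] \<or> hd a \<noteq> hd b"
        using Cons.IH by blast
      then show ?thesis using Cons True by (intro exI[of _ "x # u"] exI[of _ a] exI[of _ b]) auto
    qed
  qed
qed

definition tpf :: "nat list \<Rightarrow> nat list \<Rightarrow> nat list \<Rightarrow> nat \<Rightarrow> nat list" where
  "tpf u a b k = (if k \<le> length a then u @ take (length a - k) a else u @ take (k - length a) b)"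

definition tp :: "nat list \<Rightarrow> nat list \<Rightarrow> nat list \<Rightarrow> nat list list" where
  "tp u a b = map (tpf u a b) [0..<length a + length b + 1]"

lemma tp_len[simp]: "length (tp u a b) = length a + length b + 1"
  unfolding tp_def by simp

lemma tp_nth: "k < length a + length b + 1 \<Longrightarrow> tp u a b ! k = tpf u a b k"
  unfolding tp_def by (simp del: upt_Suc)

lemma tp_first: "tp u a b ! 0 = u @ a"
  by (simp add: tp_nth tpf_def)

lemma tp_last: "tp u a b ! (length a + length b) = u @ b"
  by (simp add: tp_nth tpf_def)

lemma tpf_len: "k \<le> length a + length b \<Longrightarrow>
   length (tpf u a b k) = length u + (if k \<le> length a then length a - k else k - length a)"
  unfolding tpf_def by auto

lemma tpf_prefix: "\<exists>z. (tpf u a b k @ z = u @ a) \<or> (tpf u a b k @ z = u @ b)"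
  unfolding tpf_def by (metis append_assoc append_take_drop_id)

lemma tp_TN: "Suc k < length (tp u a b) \<Longrightarrow> TN (tp u a b ! k) (tp u a b ! Suc k)"
proof -
  assume k: "Suc k < length (tp u a b)"
  then have k': "k < length a + length b" by simp
  show ?thesis
  proof (cases "Suc k \<le> length a")
    case True
    define j where "j = length a - Suc k"
    have j: "j < length a" "length a - k = Suc j" using True unfolding j_def by auto
    have "take (length a - k) a = take j a @ [a ! j]" using j by (simp add: take_Suc_conv_app_nth)
    moreover have "length a - Suc k = j" unfolding j_def ..
    ultimately have "tpf u a b k = tpf u a b (Suc k) @ [a ! j]"
      using True by (simp add: tpf_def)
    then show ?thesis using k' by (simp add: tp_nth TN_def)
  next
    case False
    show ?thesis
    proof (cases "k = length a")
      case True
      then have "b \<noteq> []" using k' by auto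
      then have "tpf u a b (Suc k) = tpf u a b k @ [b ! 0]"
        using True by (simp add: tpf_def take_Suc_conv_app_nth)
      then show ?thesis using k' by (simp add: tp_nth TN_def)
    next
      case False2: False
      then have "k - length a < length b" "Suc k - length a = Suc (k - length a)" using False k' by auto
      then have "tpf u a b (Suc k) = tpf u a b k @ [b ! (k - length a)]"
        using False False2 by (simp add: tpf_def take_Suc_conv_app_nth)
      then show ?thesis using k' by (simp add: tp_nth TN_def)
    qed
  qed
qed

lemma tp_nbk:
  assumes ab: "a = [] \<or> b = [] \<or> hd a \<noteq> hd b"
    and k: "Suc (Suc k) < length (tp u a b)"
  shows "tp u a b ! k \<noteq> tp u a b ! Suc (Suc k)"
proof
  assume eq: "tp u a b ! k = tp u a b ! Suc (Suc k)"
  have k': "Suc (Suc k) \<le> length a + length b" using k by simp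
  then have "tpf u a b k = tpf u a b (Suc (Suc k))" using eq by (simp add: tp_nth)
  then have "length (tpf u a b k) = length (tpf u a b (Suc (Suc k)))" by simp
  then have kk: "Suc k = length a" using k' by (simp add: tpf_len split: if_splits)
  then have ne: "a \<noteq> []" "b \<noteq> []" using k' by auto
  have t1: "take 1 a = [hd a]" "take 1 b = [hd b]" using ne by (cases a; cases b; simp)+
  have "length a - k = 1" "Suc (Suc k) - length a = 1" using kk by auto
  then have "tpf u a b k = u @ [hd a]" "tpf u a b (Suc (Suc k)) = u @ [hd b]"
    using kk t1 by (auto simp: tpf_def)
  then show False using \<open>tpf u a b k = tpf u a b (Suc (Suc k))\<close> ab ne by simp
qed

lemma walk_snoc: "walk E (xs @ [z]) \<longleftrightarrow> walk E xs \<and> (xs \<noteq> [] \<longrightarrow> {last xs, z} \<in> E)"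
proof (cases "xs = []")
  case True then show ?thesis by (simp add: walk_def)
next
  case False
  then obtain n where n: "length xs = Suc n" by (cases xs) auto
  have "walk E (xs @ [z]) \<longleftrightarrow> (\<forall>k<Suc n. {(xs@[z])!k, (xs@[z])!Suc k} \<in> E)"
    unfolding walk_def using n by simp
  also have "\<dots> \<longleftrightarrow> (\<forall>k<n. {(xs@[z])!k, (xs@[z])!Suc k} \<in> E) \<and> {(xs@[z])!n, (xs@[z])!Suc n} \<in> E"
    by (simp only: All_less_Suc conj_commute)
  also have "(\<forall>k<n. {(xs@[z])!k, (xs@[z])!Suc k} \<in> E) \<longleftrightarrow> (\<forall>k<n. {xs!k, xs!Suc k} \<in> E)"
    using n by (simp add: nth_append)
  also have "(\<forall>k<n. {xs!k, xs!Suc k} \<in> E) \<longleftrightarrow> walk E xs"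
    unfolding walk_def using n by simp
  also have "(xs@[z])!n = last xs" using n False by (simp add: nth_append last_conv_nth)
  also have "(xs@[z])!Suc n = z" using n by (simp add: nth_append)
  finally show ?thesis using False by simp
qed

lemma nbk_snoc: "nbk (xs @ [z]) \<longleftrightarrow> nbk xs \<and> (length xs \<ge> 2 \<longrightarrow> xs ! (length xs - 2) \<noteq> z)"
proof (cases "length xs \<ge> 2")
  case False
  then show ?thesis unfolding nbk_def by (auto simp: nth_append)
next
  case True
  then obtain n where n: "length xs = Suc (Suc n)" by (metis add_2_eq_Suc le_Suc_ex)
  have "nbk (xs @ [z]) \<longleftrightarrow> (\<forall>k<Suc n. (xs@[z])!k \<noteq> (xs@[z])!Suc (Suc k))"
    unfolding nbk_def using n by simp
  also have "\<dots> \<longleftrightarrow> (\<forall>k<n. (xs@[z])!k \<noteq> (xs@[z])!Suc (Suc k)) \<and> (xs@[z])!n \<noteq> (xs@[z])!Suc (Suc n)"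
    by (simp only: All_less_Suc conj_commute)
  also have "(\<forall>k<n. (xs@[z])!k \<noteq> (xs@[z])!Suc (Suc k)) \<longleftrightarrow> (\<forall>k<n. xs!k \<noteq> xs!Suc (Suc k))"
    using n by (simp add: nth_append)
  also have "(\<forall>k<n. xs!k \<noteq> xs!Suc (Suc k)) \<longleftrightarrow> nbk xs"
    unfolding nbk_def using n by simp
  also have "(xs@[z])!n = xs ! (length xs - 2)" using n by (simp add: nth_append)
  also have "(xs@[z])!Suc (Suc n) = z" using n by (simp add: nth_append)
  finally show ?thesis using True by simp
qed

lemma bb2[simp]: "butlast (butlast (x @ [c1, c2])) = x"
  by (simp add: butlast_append)

lemma noshort_mono: "noshort V E L \<Longrightarrow> L' \<le> L \<Longrightarrow> noshort V E L'"
  unfolding noshort_def by auto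

context tloc begin

lemma phiA:
  assumes "tree_word p q x" "tree_word p q y" "tree_word p q z" "TN x y" "TN y z" "x \<noteq> z"
  shows "phi E v x \<noteq> phi E v z"
proof -
  from assms(4,5) consider
      (a) c1 c2 where "y = x @ [c1]" "z = y @ [c2]"
    | (b) c1 c2 where "y = x @ [c1]" "y = z @ [c2]"
    | (c) c1 c2 where "x = y @ [c1]" "z = y @ [c2]"
    | (d) c1 c2 where "x = y @ [c1]" "y = z @ [c2]"
    unfolding TN_def by blast
  then show ?thesis
  proof cases
    case a then show ?thesis using inv[OF assms(3)] by auto
  next
    case b then show ?thesis using assms(6) by auto
  next
    case c then show ?thesis using phi_child_inj[of y c1 c2] assms by auto
  next
    case d then show ?thesis using inv[OF assms(1)] by auto
  qed
qed

lemma phiB: "tree_word p q x \<Longrightarrow> tree_word p q y \<Longrightarrow> TN x y \<Longrightarrow> {phi E v x, phi E v y} \<in> E"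
  unfolding TN_def using phi_edge by (auto simp: insert_commute)

lemma map_phi_walk:
  assumes tw: "\<forall>t\<in>set ts. tree_word p q t"
    and tn: "\<forall>k. Suc k < length ts \<longrightarrow> TN (ts!k) (ts!Suc k)"
    and nb: "nbk ts"
  shows "walk E (map (phi E v) ts) \<and> nbk (map (phi E v) ts)"
proof
  show "walk E (map (phi E v) ts)" unfolding walk_def
    using tw tn phiB by (simp add: nth_mem)
  show "nbk (map (phi E v) ts)" unfolding nbk_def
  proof (intro allI impI)
    fix k assume k: "Suc (Suc k) < length (map (phi E v) ts)"
    then show "map (phi E v) ts ! k \<noteq> map (phi E v) ts ! Suc (Suc k)"
      using phiA[of "ts!k" "ts!Suc k" "ts!Suc (Suc k)"] tw tn[rule_format, of k] tn[rule_format, of "Suc k"]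
        nb[unfolded nbk_def, rule_format, of k] by (simp add: nth_mem)
  qed
qed

abbreviation TBs :: "nat \<Rightarrow> nat list set" where
  "TBs r \<equiv> {w. tree_word p q w \<and> length w \<le> r}"

lemma tp_TBs:
  assumes "u @ a \<in> TBs r" "u @ b \<in> TBs r" "t \<in> set (tp u a b)"
  shows "t \<in> TBs r"
proof -
  obtain k where "t = tpf u a b k" using assms(3) unfolding tp_def by auto
  moreover obtain z where "tpf u a b k @ z = u @ a \<or> tpf u a b k @ z = u @ b" using tpf_prefix by blast
  ultimately show ?thesis using assms(1,2) tw_append[of p q t z]
    by (metis (no_types, lifting) le_trans length_append le_add1 mem_Collect_eq)
qed

lemma tp_walk:
  assumes "u @ a \<in> TBs r" "u @ b \<in> TBs r" "a = [] \<or> b = [] \<or> hd a \<noteq> hd b"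
  shows "walk E (map (phi E v) (tp u a b)) \<and> nbk (map (phi E v) (tp u a b))
     \<and> set (map (phi E v) (tp u a b)) \<subseteq> V"
proof -
  have tw: "\<forall>t\<in>set (tp u a b). tree_word p q t" using tp_TBs[OF assms(1,2)] by blast
  have "nbk (tp u a b)" unfolding nbk_def using tp_nbk[OF assms(3)] by blast
  then show ?thesis using map_phi_walk[OF tw] tp_TN phi_V tw by auto
qed

lemma phi_inj:
  assumes ns: "noshort V E (2 * r)" and w: "w1 \<in> TBs r" "w2 \<in> TBs r" and eq: "phi E v w1 = phi E v w2"
  shows "w1 = w2"
proof (rule ccontr)
  assume ne: "w1 \<noteq> w2"
  obtain u a b where uab: "w1 = u @ a" "w2 = u @ b" "a = [] \<or> b = [] \<or> hd a \<noteq> hd b" using lcp by blast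
  define W where "W = map (phi E v) (tp u a b)"
  have l1: "length a + length b \<ge> 1" using ne uab by (cases a; cases b) auto
  have l2: "length a + length b \<le> 2 * r" using w uab by auto
  have tw: "walk E W" "nbk W" "set W \<subseteq> V" using tp_walk[of u a r b] uab w unfolding W_def by auto
  have "W ! 0 = phi E v w1" unfolding W_def using uab by (simp add: tp_first)
  moreover have "W ! (length a + length b) = phi E v w2" unfolding W_def using uab by (simp add: tp_last)
  moreover have "length W = Suc (length a + length b)" unfolding W_def by simp
  ultimately have "W \<in> CW V E (length a + length b)" using tw eq unfolding CW_def by simp
  then show False using ns l1 l2 unfolding noshort_def by blast
qed

lemma phi_edge_refl:
  assumes ns: "noshort V E (2 * r + 1)" and w: "w1 \<in> TBs r" "w2 \<in> TBs r"
    and e: "{phi E v w1, phi E v w2} \<in> E"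
  shows "TN w1 w2"
proof (rule ccontr)
  assume nt: "\<not> TN w1 w2"
  have ns': "noshort V E (2 * r)" using noshort_mono[OF ns] by simp
  have ne: "w1 \<noteq> w2" using e sg_edge[OF sg] by auto
  obtain u a b where uab: "w1 = u @ a" "w2 = u @ b" "a = [] \<or> b = [] \<or> hd a \<noteq> hd b" using lcp by blast
  define n where "n = length a + length b"
  define X where "X = map (phi E v) (tp u a b)"
  have X: "walk E X" "nbk X" "set X \<subseteq> V" using tp_walk[of u a r b] uab(3) w unfolding X_def uab(1,2) by blast+
  have lX: "length X = Suc n" unfolding X_def n_def by simp
  have n1: "n \<ge> 1" using ne uab unfolding n_def by (cases a; cases b) auto
  have n2: "n \<le> 2 * r" using w uab unfolding n_def by auto
  have "last X = X ! n" using lX by (metis diff_Suc_1 last_conv_nth list.size(3) nat.distinct(1))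
  also have "\<dots> = phi E v (tp u a b ! n)" unfolding X_def n_def by simp
  also have "\<dots> = phi E v w2" unfolding n_def uab by (simp add: tp_last)
  finally have lastX: "last X = phi E v w2" .
  define t where "t = tp u a b ! (n - 1)"
  have "t \<in> set (tp u a b)" unfolding t_def n_def by (rule nth_mem) simp
  then have tT: "t \<in> TBs r" using tp_TBs[of u a r b t] uab w by simp
  have "Suc (n - 1) = n" using n1 by simp
  then have "TN t (tp u a b ! n)" using tp_TN[of "n - 1" u a b] unfolding t_def n_def by simp
  then have "TN t w2" unfolding n_def uab by (simp add: tp_last)
  then have "t \<noteq> w1" using nt unfolding TN_def by auto
  then have tne: "phi E v t \<noteq> phi E v w1" using phi_inj[OF ns' tT w(1)] by auto
  have "length X - 2 = n - 1" using lX by simp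
  then have X2: "X ! (length X - 2) = phi E v t" unfolding X_def t_def using n1 n_def by simp
  define W where "W = X @ [phi E v w1]"
  have V1: "phi E v w1 \<in> V" using w phi_V by auto
  have "walk E W" unfolding W_def walk_snoc using X(1) lastX e lX by (auto simp: insert_commute)
  moreover have "nbk W" unfolding W_def nbk_snoc using X(2) X2 tne by simp
  moreover have "set W \<subseteq> V" unfolding W_def using X(3) V1 by simp
  moreover have "W ! 0 = phi E v w1" unfolding W_def X_def using uab by (simp add: nth_append tp_first)
  moreover have "W ! Suc n = phi E v w1" unfolding W_def using lX by (simp add: nth_append)
  moreover have "length W = Suc (Suc n)" unfolding W_def using lX by simp
  ultimately have "W \<in> CW V E (Suc n)" unfolding CW_def by simp
  then show False using ns n1 n2 unfolding noshort_def by auto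
qed

lemma ball_iso:
  assumes ns: "noshort V E (2 * r + 1)"
  shows "ball_iso_tree E v r p q"
proof -
  have ns': "noshort V E (2 * r)" using noshort_mono[OF ns] by simp
  have GB: "ball_verts E v r = phi E v ` TBs r" by (rule ball_phi)
  have TB': "ball_verts (tree_edges p q) [] r = TBs r" by (rule TB)
  have inj: "inj_on (phi E v) (TBs r)" using phi_inj[OF ns'] by (auto intro: inj_onI)
  then have bij: "bij_betw (phi E v) (TBs r) (ball_verts E v r)" using GB by (simp add: bij_betw_def)
  define f where "f = inv_into (TBs r) (phi E v)"
  have bf: "bij_betw f (ball_verts E v r) (TBs r)" unfolding f_def by (rule bij_betw_inv_into[OF bij])
  have e0: "[] \<in> TBs r" by simp
  have "f (phi E v []) = []" unfolding f_def by (rule inv_into_f_f[OF inj e0])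
  then have f0: "f v = []" by simp
  have ff: "phi E v (f x) = x" if x: "x \<in> ball_verts E v r" for x
  proof -
    have "x \<in> phi E v ` TBs r" using x GB by blast
    then show ?thesis unfolding f_def by (rule f_inv_into_f)
  qed
  have fT: "f x \<in> TBs r" if x: "x \<in> ball_verts E v r" for x
    using bij_betw_apply[OF bf x] .
  have edges: "({x, y} \<in> ball_edges E v r) = ({f x, f y} \<in> ball_edges (tree_edges p q) [] r)"
    if x: "x \<in> ball_verts E v r" and y: "y \<in> ball_verts E v r" for x y
  proof -
    have fx: "f x \<in> TBs r" and fy: "f y \<in> TBs r" using fT x y by auto
    have "{x, y} \<in> ball_edges E v r \<longleftrightarrow> {x,y} \<in> E" unfolding ball_edges_def using x y by auto
    also have "\<dots> \<longleftrightarrow> {phi E v (f x), phi E v (f y)} \<in> E" using ff[OF x] ff[OF y] by simp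
    also have "\<dots> \<longleftrightarrow> TN (f x) (f y)"
    proof
      assume "{phi E v (f x), phi E v (f y)} \<in> E"
      then show "TN (f x) (f y)" by (rule phi_edge_refl[OF ns fx fy])
    next
      assume "TN (f x) (f y)"
      then show "{phi E v (f x), phi E v (f y)} \<in> E" using phiB fx fy by blast
    qed
    also have "\<dots> \<longleftrightarrow> {f x, f y} \<in> tree_edges p q"
      using fx fy unfolding TE_iff TN_def by blast
    also have "\<dots> \<longleftrightarrow> {f x, f y} \<in> ball_edges (tree_edges p q) [] r"
      unfolding ball_edges_def using fx fy TB' by auto
    finally show ?thesis .
  qed
  show ?thesis unfolding ball_iso_tree_def rooted_iso_def
    using bf TB' f0 edges by (intro exI[of _ f]) simp
qed

end

definition pr :: "'a \<times> bool list \<Rightarrow> 'a \<times> bool list" where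
  "pr x = (fst x, tl (snd x))"
definition bt :: "'a \<times> bool list \<Rightarrow> bool" where
  "bt x = hd (snd x)"

lemma pr_enc[simp]: "pr (enc (x, b)) = x" unfolding pr_def enc_def by simp
lemma bt_enc[simp]: "bt (enc (x, b)) = b" unfolding bt_def enc_def by simp
lemma enc_eq[simp]: "enc x = enc y \<longleftrightarrow> x = y"
  unfolding enc_def by (cases x; cases y) auto
lemma enc_pr: "snd x \<noteq> [] \<Longrightarrow> enc (pr x, bt x) = x"
  unfolding enc_def pr_def bt_def by (cases x) auto
lemma inj_enc: "inj enc" by (rule injI) simp

lemma V'_iff: "x \<in> enc ` (V \<times> UNIV) \<longleftrightarrow> snd x \<noteq> [] \<and> pr x \<in> V"
proof
  assume "x \<in> enc ` (V \<times> UNIV)" then show "snd x \<noteq> [] \<and> pr x \<in> V" by (auto simp: enc_def pr_def)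
next
  assume "snd x \<noteq> [] \<and> pr x \<in> V"
  then show "x \<in> enc ` (V \<times> UNIV)" using enc_pr[of x] by (metis UNIV_I mem_Sigma_iff rev_image_eqI)
qed

definition liftE :: "('a \<times> bool list) set set \<Rightarrow> ('a \<times> bool list) set set \<Rightarrow> ('a \<times> bool list) set set" where
  "liftE E S = {{enc (u, i), enc (v, i \<noteq> ({u,v} \<in> S))} | u v i. {u,v} \<in> E}"

definition Hraw :: "('a \<times> bool list) set set \<Rightarrow> ('a \<times> bool list) set set \<Rightarrow> (('a \<times> bool list) \<times> bool) set set" where
  "Hraw E S = {{(u, i), (v, i \<noteq> ({u,v} \<in> S))} | u v i. {u,v} \<in> E}"

lemma liftE_img: "liftE E S = (\<lambda>e. enc ` e) ` Hraw E S"
proof (rule equalityI; rule subsetI)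
  fix x assume "x \<in> liftE E S"
  then obtain u v i where uv: "{u,v} \<in> E" "x = {enc (u, i), enc (v, i \<noteq> ({u,v} \<in> S))}"
    unfolding liftE_def by blast
  have "{(u, i), (v, i \<noteq> ({u,v} \<in> S))} \<in> Hraw E S" unfolding Hraw_def using uv(1) by blast
  moreover have "x = enc ` {(u, i), (v, i \<noteq> ({u,v} \<in> S))}" using uv(2) by simp
  ultimately show "x \<in> (\<lambda>e. enc ` e) ` Hraw E S" by (rule rev_image_eqI)
next
  fix x assume "x \<in> (\<lambda>e. enc ` e) ` Hraw E S"
  then obtain e where e: "e \<in> Hraw E S" "x = enc ` e" by blast
  then obtain u v i where uv: "{u,v} \<in> E" "e = {(u, i), (v, i \<noteq> ({u,v} \<in> S))}"
    unfolding Hraw_def by blast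
  have "x = {enc (u, i), enc (v, i \<noteq> ({u,v} \<in> S))}" using e uv by simp
  then show "x \<in> liftE E S" unfolding liftE_def using uv(1) by blast
qed

lemma Hraw_mem: "{(u,i),(v,j)} \<in> Hraw E S \<longleftrightarrow> {u,v} \<in> E \<and> j = (i \<noteq> ({u,v} \<in> S))"
proof
  assume "{(u,i),(v,j)} \<in> Hraw E S"
  then obtain u' v' i' where e: "{u',v'} \<in> E" and eq: "{(u,i),(v,j)} = {(u',i'),(v', i' \<noteq> ({u',v'} \<in> S))}"
    unfolding Hraw_def by (auto simp only: mem_Collect_eq)
  from eq consider "(u,i) = (u',i') \<and> (v,j) = (v', i' \<noteq> ({u',v'} \<in> S))"
    | "(u,i) = (v', i' \<noteq> ({u',v'} \<in> S)) \<and> (v,j) = (u',i')"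
    unfolding doubleton_eq_iff by blast
  then show "{u,v} \<in> E \<and> j = (i \<noteq> ({u,v} \<in> S))"
  proof cases
    case 1
    then have "u = u'" "v = v'" "i = i'" "j = (i' \<noteq> ({u',v'} \<in> S))" by simp_all
    then show ?thesis using e by simp
  next
    case 2
    then have "u = v'" "v = u'" "j = i'" "i = (i' \<noteq> ({u',v'} \<in> S))" by simp_all
    moreover have "{v',u'} = {u',v'}" by (rule insert_commute)
    ultimately show ?thesis using e by (cases i'; cases "{u',v'} \<in> S") (simp_all add: insert_commute)
  qed
next
  assume "{u,v} \<in> E \<and> j = (i \<noteq> ({u,v} \<in> S))"
  then show "{(u,i),(v,j)} \<in> Hraw E S" unfolding Hraw_def
    by (intro CollectI exI[of _ u] exI[of _ v] exI[of _ i]) simp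
qed

lemma liftE_mem: "{enc (u,i), enc (v,j)} \<in> liftE E S \<longleftrightarrow> {u,v} \<in> E \<and> j = (i \<noteq> ({u,v} \<in> S))"
proof -
  have "{enc (u,i), enc (v,j)} \<in> liftE E S \<longleftrightarrow> {(u,i),(v,j)} \<in> Hraw E S"
  proof
    assume "{enc (u,i), enc (v,j)} \<in> liftE E S"
    then obtain e where e: "e \<in> Hraw E S" "{enc (u,i), enc (v,j)} = enc ` e" unfolding liftE_img by blast
    then have "{(u,i),(v,j)} = e" using inj_image_eq_iff[OF inj_enc, of "{(u,i),(v,j)}" e] by simp
    then show "{(u,i),(v,j)} \<in> Hraw E S" using e by simp
  next
    assume "{(u,i),(v,j)} \<in> Hraw E S"
    then show "{enc (u,i), enc (v,j)} \<in> liftE E S" unfolding liftE_img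
      by (rule rev_image_eqI) simp
  qed
  then show ?thesis by (simp add: Hraw_mem)
qed

lemma liftE_elem: "e \<in> liftE E S \<Longrightarrow> z \<in> e \<Longrightarrow> snd z \<noteq> []"
  unfolding liftE_img by (auto simp: enc_def)

lemma two_lift_Hraw: "two_lift V E (Hraw E S)"
  unfolding two_lift_def
proof (intro conjI allI impI)
  show "Hraw E S \<subseteq> {{(u, i), (v, j)} |u v i j. {u, v} \<in> E}" unfolding Hraw_def by blast
next
  fix u v assume uv: "{u,v} \<in> E"
  show "let par = {{(u, False), (v, False)}, {(u, True), (v, True)}};
            crs = {{(u, False), (v, True)}, {(u, True), (v, False)}}
        in par \<subseteq> Hraw E S \<and> crs \<inter> Hraw E S = {} \<or> crs \<subseteq> Hraw E S \<and> par \<inter> Hraw E S = {}"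
    using uv by (cases "{u,v} \<in> S") (auto simp: Hraw_mem)
qed

lemma nbr_lift:
  "nbr (liftE E S) (enc (y,b)) = (\<lambda>x. enc (x, b \<noteq> ({y,x} \<in> S))) ` nbr E y"
proof
  show "nbr (liftE E S) (enc (y,b)) \<subseteq> (\<lambda>x. enc (x, b \<noteq> ({y,x} \<in> S))) ` nbr E y"
  proof
    fix z assume "z \<in> nbr (liftE E S) (enc (y,b))"
    then have z: "{enc (y,b), z} \<in> liftE E S" unfolding nbr_def by simp
    then have "snd z \<noteq> []" using liftE_elem by blast
    then have zz: "z = enc (pr z, bt z)" using enc_pr by metis
    then have "{y, pr z} \<in> E \<and> bt z = (b \<noteq> ({y, pr z} \<in> S))" using z liftE_mem by metis
    then have "z = enc (pr z, b \<noteq> ({y, pr z} \<in> S))" "pr z \<in> nbr E y"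
      using zz unfolding nbr_def by auto
    then show "z \<in> (\<lambda>x. enc (x, b \<noteq> ({y,x} \<in> S))) ` nbr E y"
      by (rule image_eqI)
  qed
next
  show "(\<lambda>x. enc (x, b \<noteq> ({y,x} \<in> S))) ` nbr E y \<subseteq> nbr (liftE E S) (enc (y,b))"
    unfolding nbr_def by (auto simp: liftE_mem)
qed

lemma card_nbr_lift: "card (nbr (liftE E S) (enc (y,b))) = card (nbr E y)"
  unfolding nbr_lift by (rule card_image) (auto intro: inj_onI)

lemma sg_lift:
  assumes sg: "simple_graph V E"
  shows "simple_graph (enc ` (V \<times> UNIV)) (liftE E S)"
  unfolding simple_graph_def
proof (intro conjI ballI)
  show "finite (enc ` (V \<times> UNIV))" using sg_fin[OF sg] by simp
next
  fix e assume "e \<in> liftE E S"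
  then obtain u v i where e: "{u,v} \<in> E" "e = {enc (u, i), enc (v, i \<noteq> ({u,v} \<in> S))}"
    unfolding liftE_def by blast
  then have "u \<in> V" "v \<in> V" "u \<noteq> v" using sg_edge[OF sg] by auto
  then have "enc (u, i) \<in> enc ` (V \<times> UNIV)" "enc (v, i \<noteq> ({u,v} \<in> S)) \<in> enc ` (V \<times> UNIV)"
    "enc (u, i) \<noteq> enc (v, i \<noteq> ({u,v} \<in> S))" by auto
  then show "\<exists>u v. u \<in> enc ` (V \<times> UNIV) \<and> v \<in> enc ` (V \<times> UNIV) \<and> u \<noteq> v \<and> e = {u, v}"
    using e(2) by (intro exI[of _ "enc (u, i)"] exI[of _ "enc (v, i \<noteq> ({u,v} \<in> S))"]) simp
qed

definition cr :: "'v set set \<Rightarrow> 'v list \<Rightarrow> nat \<Rightarrow> nat" where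
  "cr S xs k = card {j. j < k \<and> {xs!j, xs!Suc j} \<in> S}"

lemma cr_0[simp]: "cr S xs 0 = 0" unfolding cr_def by simp
lemma cr_empty[simp]: "cr {} xs k = 0" unfolding cr_def by simp

lemma cr_Suc: "cr S xs (Suc k) = cr S xs k + (if {xs!k, xs!Suc k} \<in> S then 1 else 0)"
proof (cases "{xs!k, xs!Suc k} \<in> S")
  case True
  then have "{j. j < Suc k \<and> {xs!j, xs!Suc j} \<in> S} = insert k {j. j < k \<and> {xs!j, xs!Suc j} \<in> S}"
    by (auto simp: less_Suc_eq)
  then show ?thesis using True unfolding cr_def by simp
next
  case False
  then have "{j. j < Suc k \<and> {xs!j, xs!Suc j} \<in> S} = {j. j < k \<and> {xs!j, xs!Suc j} \<in> S}"
    by (auto simp: less_Suc_eq)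
  then show ?thesis using False unfolding cr_def by simp
qed

lemma lift_vert: "x \<in> enc ` (V \<times> UNIV) \<Longrightarrow> x = enc (pr x, bt x) \<and> pr x \<in> V"
  using V'_iff enc_pr by metis

lemma lift_step_edge:
  assumes x: "x \<in> enc ` (V \<times> UNIV)" and y: "y \<in> enc ` (V \<times> UNIV)" and e: "{x,y} \<in> liftE E S"
  shows "{pr x, pr y} \<in> E \<and> bt y = (bt x \<noteq> ({pr x, pr y} \<in> S))"
proof -
  have "{enc (pr x, bt x), enc (pr y, bt y)} \<in> liftE E S" using lift_vert[OF x] lift_vert[OF y] e by simp
  then show ?thesis by (simp add: liftE_mem)
qed

lemma finite_CW: "finite V \<Longrightarrow> finite (CW V E l)"
proof -
  assume "finite V"
  then have "finite {xs. set xs \<subseteq> V \<and> length xs = Suc l}" by (rule finite_lists_length_eq)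
  moreover have "CW V E l \<subseteq> {xs. set xs \<subseteq> V \<and> length xs = Suc l}" unfolding CW_def by auto
  ultimately show ?thesis by (rule rev_finite_subset)
qed

lemma proj_CW:
  assumes W: "W \<in> CW (enc ` (V \<times> UNIV)) (liftE E S) l"
  shows "map pr W \<in> CW V E l"
proof -
  let ?V' = "enc ` (V \<times> UNIV)"
  have len: "length W = Suc l" and sW: "set W \<subseteq> ?V'" and wW: "walk (liftE E S) W" and nW: "nbk W"
    and cW: "W!0 = W!l" using W unfolding CW_def by auto
  have inV: "\<And>k. k < length W \<Longrightarrow> W!k \<in> ?V'" using sW nth_mem by blast
  have st: "\<And>k. Suc k < length W \<Longrightarrow> {pr (W!k), pr (W!Suc k)} \<in> E \<and>
       bt (W!Suc k) = (bt (W!k) \<noteq> ({pr (W!k), pr (W!Suc k)} \<in> S))"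
    using lift_step_edge inV wW unfolding walk_def by (metis Suc_lessD)
  have "walk E (map pr W)" unfolding walk_def using st by simp
  moreover have "nbk (map pr W)" unfolding nbk_def
  proof (intro allI impI)
    fix k assume k: "Suc (Suc k) < length (map pr W)"
    show "map pr W ! k \<noteq> map pr W ! Suc (Suc k)"
    proof
      assume eq: "map pr W ! k = map pr W ! Suc (Suc k)"
      have e1: "{pr (W!k), pr (W!Suc k)} \<in> E \<and> bt (W!Suc k) = (bt (W!k) \<noteq> ({pr (W!k), pr (W!Suc k)} \<in> S))"
        using st k by simp
      have e2: "{pr (W!Suc k), pr (W!Suc (Suc k))} \<in> E \<and> bt (W!Suc (Suc k)) = (bt (W!Suc k) \<noteq> ({pr (W!Suc k), pr (W!Suc (Suc k))} \<in> S))"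
        using st k by simp
      have p: "pr (W!k) = pr (W!Suc (Suc k))" using eq k by simp
      then have "{pr (W!Suc k), pr (W!Suc (Suc k))} = {pr (W!k), pr (W!Suc k)}" by (simp add: insert_commute)
      then have bb: "bt (W!k) = bt (W!Suc (Suc k))" using e1 e2 by auto
      have k2: "Suc (Suc k) < length W" using k by simp
      then have k1: "k < length W" by simp
      have a1: "W!k = enc (pr (W!k), bt (W!k))" using lift_vert[OF inV[OF k1]] by blast
      have a2: "W!Suc (Suc k) = enc (pr (W!Suc (Suc k)), bt (W!Suc (Suc k)))" using lift_vert[OF inV[OF k2]] by blast
      from a1 have "W!k = enc (pr (W!Suc (Suc k)), bt (W!Suc (Suc k)))" unfolding p bb .
      then have "W!k = W!Suc (Suc k)" using a2 by simp
      then show False using nW k unfolding nbk_def by simp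
    qed
  qed
  moreover have "set (map pr W) \<subseteq> V" using sW lift_vert by auto
  ultimately show ?thesis using len cW unfolding CW_def by simp
qed

lemma noshort_lift: "noshort V E L \<Longrightarrow> noshort (enc ` (V \<times> UNIV)) (liftE E S) L"
  unfolding noshort_def using proj_CW by blast

lemma parity:
  assumes sW: "set W \<subseteq> enc ` (V \<times> UNIV)" and wW: "walk (liftE E S) W"
  shows "k < length W \<Longrightarrow> bt (W!k) = (bt (W!0) \<noteq> odd (cr S (map pr W) k))"
proof (induction k)
  case 0 then show ?case by simp
next
  case (Suc k)
  have inV: "\<And>k. k < length W \<Longrightarrow> W!k \<in> enc ` (V \<times> UNIV)" using sW nth_mem by blast
  have "{W!k, W!Suc k} \<in> liftE E S" using wW Suc.prems unfolding walk_def by simp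
  then have "bt (W!Suc k) = (bt (W!k) \<noteq> ({pr (W!k), pr (W!Suc k)} \<in> S))"
    using lift_step_edge[OF inV inV] Suc.prems by simp
  moreover have "cr S (map pr W) (Suc k) = cr S (map pr W) k + (if {pr (W!k), pr (W!Suc k)} \<in> S then 1 else 0)"
    using Suc.prems by (simp add: cr_Suc)
  ultimately show ?case using Suc by auto
qed

lemma card_lift_le:
  assumes fin: "finite V"
  shows "card (CW (enc ` (V \<times> UNIV)) (liftE E S) l) \<le> 2 * card {W \<in> CW V E l. even (cr S W l)}"
proof -
  let ?V' = "enc ` (V \<times> UNIV)"
  let ?C' = "CW ?V' (liftE E S) l"
  let ?T = "{W \<in> CW V E l. even (cr S W l)}"
  define g where "g W = (map pr W, bt (W!0))" for W :: "('a \<times> bool list) list"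
  have inj: "inj_on g ?C'"
  proof (rule inj_onI)
    fix W1 W2 assume W1: "W1 \<in> ?C'" and W2: "W2 \<in> ?C'" and eq: "g W1 = g W2"
    have m: "map pr W1 = map pr W2" and b: "bt (W1!0) = bt (W2!0)" using eq unfolding g_def by auto
    have l: "length W1 = length W2" using m by (metis length_map)
    show "W1 = W2"
    proof (rule nth_equalityI[OF l])
      fix k assume k: "k < length W1"
      have p: "pr (W1!k) = pr (W2!k)" using m k l by (metis nth_map)
      have s1: "set W1 \<subseteq> ?V'" "walk (liftE E S) W1" using W1 unfolding CW_def by auto
      have s2: "set W2 \<subseteq> ?V'" "walk (liftE E S) W2" using W2 unfolding CW_def by auto
      have k2: "k < length W2" using k l by simp
      have bb: "bt (W1!k) = bt (W2!k)"
        using parity[OF s1 k] parity[OF s2 k2] m b by simp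
      have "W1!k \<in> ?V'" using s1(1) k nth_mem by blast
      then have a1: "W1!k = enc (pr (W1!k), bt (W1!k))" using lift_vert by blast
      have "W2!k \<in> ?V'" using s2(1) k2 nth_mem by blast
      then have a2: "W2!k = enc (pr (W2!k), bt (W2!k))" using lift_vert by blast
      from a1 have "W1!k = enc (pr (W2!k), bt (W2!k))" unfolding p bb .
      then show "W1!k = W2!k" using a2 by simp
    qed
  qed
  have img: "g ` ?C' \<subseteq> ?T \<times> UNIV"
  proof
    fix x assume "x \<in> g ` ?C'"
    then obtain W where W: "W \<in> ?C'" "x = g W" by blast
    have "map pr W \<in> CW V E l" using proj_CW[OF W(1)] .
    moreover have s1: "set W \<subseteq> ?V'" "walk (liftE E S) W" "length W = Suc l" "W!0 = W!l"
      using W(1) unfolding CW_def by auto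
    moreover have "bt (W!l) = (bt (W!0) \<noteq> odd (cr S (map pr W) l))"
      using parity[OF s1(1,2), of l] s1(3) by simp
    ultimately have "even (cr S (map pr W) l)" by (cases "bt (W ! l)") auto
    then show "x \<in> ?T \<times> UNIV" using W(2) \<open>map pr W \<in> CW V E l\<close> unfolding g_def by simp
  qed
  have "finite ?T" using finite_CW[OF fin] by simp
  then have "card (?T \<times> (UNIV :: bool set)) = 2 * card ?T" by (simp add: card_cartesian_product)
  moreover have "card ?C' = card (g ` ?C')" using inj by (simp add: card_image)
  moreover have "card (g ` ?C') \<le> card (?T \<times> (UNIV :: bool set))"
    using img \<open>finite ?T\<close> by (intro card_mono) auto
  ultimately show ?thesis by simp
qed

lemma sub_CW:
  assumes W: "W \<in> CW V E g" and ij: "i < j" "j \<le> g" and eq: "W!i = W!j"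
  shows "drop i (take (Suc j) W) \<in> CW V E (j - i)"
proof -
  let ?X = "drop i (take (Suc j) W)"
  have len: "length W = Suc g" and sW: "set W \<subseteq> V" and wW: "walk E W" and nW: "nbk W"
    using W unfolding CW_def by auto
  have lX: "length ?X = Suc (j - i)" using len ij by simp
  have nth: "\<And>k. k \<le> j - i \<Longrightarrow> ?X ! k = W ! (i + k)" using len ij by simp
  have "set ?X \<subseteq> set W" by (meson set_drop_subset set_take_subset subset_trans)
  then have "set ?X \<subseteq> V" using sW by blast
  moreover have "walk E ?X" unfolding walk_def
  proof (intro allI impI)
    fix k assume k: "Suc k < length ?X"
    then have "{W!(i+k), W!Suc (i+k)} \<in> E" using wW len lX ij unfolding walk_def by simp
    then show "{?X!k, ?X!Suc k} \<in> E" using nth k lX by simp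
  qed
  moreover have "nbk ?X" unfolding nbk_def
  proof (intro allI impI)
    fix k assume k: "Suc (Suc k) < length ?X"
    then have "W!(i+k) \<noteq> W!Suc (Suc (i+k))" using nW len lX ij unfolding nbk_def by simp
    then show "?X!k \<noteq> ?X!Suc (Suc k)" using nth k lX by simp
  qed
  moreover have "?X ! 0 = ?X ! (j - i)" using nth eq ij by simp
  ultimately show ?thesis using lX unfolding CW_def by simp
qed

lemma min_struct:
  assumes sg: "simple_graph V E" and W: "W \<in> CW V E g" and g: "g \<ge> 1" and ns: "noshort V E (g - 1)"
  shows "g \<ge> 3 \<and> (\<forall>j<g. {W!j, W!Suc j} = {W!0, W!1} \<longrightarrow> j = 0)"
proof -
  have len: "length W = Suc g" and wW: "walk E W" and nW: "nbk W" and cl: "W!0 = W!g"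
    using W unfolding CW_def by auto
  have dist: "W!i \<noteq> W!j" if "i < j" "j < g" for i j
  proof
    assume "W!i = W!j"
    then have "drop i (take (Suc j) W) \<in> CW V E (j - i)" using sub_CW[OF W that(1)] that(2) by simp
    then show False using ns that unfolding noshort_def by auto
  qed
  have g1: "g \<noteq> 1"
  proof
    assume "g = 1"
    then have "{W!0, W!0} \<in> E" using wW len cl unfolding walk_def by auto
    then show False using sg_edge[OF sg] by blast
  qed
  have g2: "g \<noteq> 2"
  proof
    assume "g = 2"
    then have "W!0 \<noteq> W!2" using nW len unfolding nbk_def by (auto simp: numeral_2_eq_2)
    then show False using cl \<open>g = 2\<close> by simp
  qed
  have g3: "g \<ge> 3" using g g1 g2 by simp
  have "j = 0" if j: "j < g" "{W!j, W!Suc j} = {W!0, W!1}" for j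
  proof (rule ccontr)
    assume j0: "j \<noteq> 0"
    from j(2) consider "W!j = W!0" "W!Suc j = W!1" | "W!j = W!1" "W!Suc j = W!0"
      unfolding doubleton_eq_iff by blast
    then show False
    proof cases
      case 1 then show False using dist[of 0 j] j j0 by simp
    next
      case 2
      have "j = 1" using 2 dist[of 1 j] dist[of j 1] j j0 g3 by (metis less_linear nat_neq_iff One_nat_def less_Suc0)
      then have "W!2 = W!0" using 2 by (simp add: numeral_2_eq_2)
      then show False using dist[of 0 2] g3 by simp
    qed
  qed
  then show ?thesis using g3 by blast
qed

definition flip :: "'x set \<Rightarrow> 'x \<Rightarrow> 'x set" where
  "flip S e = (if e \<in> S then S - {e} else insert e S)"

lemma flip_flip[simp]: "flip (flip S e) e = S"
  unfolding flip_def by auto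

lemma flip_sub: "S \<subseteq> E \<Longrightarrow> e \<in> E \<Longrightarrow> flip S e \<subseteq> E"
  unfolding flip_def by auto

lemma flip_parity:
  assumes g: "0 < g" and once: "\<forall>j<g. {W!j, W!Suc j} = {W!0, W!1} \<longrightarrow> j = 0"
  shows "even (cr (flip S {W!0, W!1}) W g) \<longleftrightarrow> \<not> even (cr S W g)"
proof -
  let ?e = "{W!0, W!1}"
  let ?A = "{j. j < g \<and> {W!j, W!Suc j} \<in> S}"
  have fin: "finite ?A" by simp
  show ?thesis
  proof (cases "?e \<in> S")
    case True
    have "{j. j < g \<and> {W!j, W!Suc j} \<in> flip S ?e} = ?A - {0}"
      using True once unfolding flip_def by auto
    moreover have "0 \<in> ?A" using True g by simp
    ultimately have "cr (flip S ?e) W g = cr S W g - 1" "cr S W g \<ge> 1"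
      unfolding cr_def using fin by (auto simp: card_Diff_singleton card_gt_0_iff Suc_le_eq)
    then show ?thesis by (metis One_nat_def Suc_diff_le diff_Suc_1 even_Suc le_add_diff_inverse2 plus_1_eq_Suc)
  next
    case False
    have "{j. j < g \<and> {W!j, W!Suc j} \<in> flip S ?e} = insert 0 ?A"
      using False once g unfolding flip_def by auto
    moreover have "0 \<notin> ?A" using False by simp
    ultimately have "cr (flip S ?e) W g = Suc (cr S W g)"
      unfolding cr_def using fin by simp
    then show ?thesis by simp
  qed
qed

lemma count_half:
  assumes fin: "finite E" and e: "e \<in> E" and P: "\<And>S. P (flip S e) \<longleftrightarrow> \<not> P S"
  shows "2 * card {S \<in> Pow E. P S} = 2 ^ card E"
proof -
  have bij: "bij_betw (\<lambda>S. flip S e) {S \<in> Pow E. P S} {S \<in> Pow E. \<not> P S}"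
    apply (rule bij_betw_byWitness[where f' = "\<lambda>S. flip S e"])
    using flip_sub[OF _ e] by (auto simp: P)
  have c1: "card {S \<in> Pow E. P S} = card {S \<in> Pow E. \<not> P S}" using bij_betw_same_card[OF bij] .
  have "card (Pow E) = card {S \<in> Pow E. P S} + card {S \<in> Pow E. \<not> P S}"
  proof -
    have "Pow E = {S \<in> Pow E. P S} \<union> {S \<in> Pow E. \<not> P S}" by auto
    moreover have "{S \<in> Pow E. P S} \<inter> {S \<in> Pow E. \<not> P S} = {}" by auto
    ultimately show ?thesis using fin by (metis (no_types, lifting) card_Un_disjoint finite_Pow_iff finite_Un)
  qed
  then show ?thesis using c1 fin by (simp add: card_Pow)
qed

lemma card_filter_sum: "finite C \<Longrightarrow> card {x \<in> C. P x} = (\<Sum>x\<in>C. if P x then 1 else 0)"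
  by (simp add: sum.inter_filter[symmetric])

lemma averaging:
  assumes finE: "finite E" and finC: "finite C" and ne: "C \<noteq> {}"
    and half: "\<And>W. W \<in> C \<Longrightarrow> 2 * card {S \<in> Pow E. Pr S W} = 2 ^ card E"
    and emp: "\<And>W. W \<in> C \<Longrightarrow> Pr {} W"
  shows "\<exists>S \<subseteq> E. 2 * card {W \<in> C. Pr S W} < card C"
proof (rule ccontr)
  assume "\<not> ?thesis"
  then have ge: "\<And>S. S \<in> Pow E \<Longrightarrow> card C \<le> 2 * card {W \<in> C. Pr S W}" by (auto simp: not_less)
  have "(\<Sum>S\<in>Pow E. 2 * card {W \<in> C. Pr S W}) = (\<Sum>S\<in>Pow E. \<Sum>W\<in>C. 2 * (if Pr S W then 1 else 0))"
    using finC by (simp add: card_filter_sum sum_distrib_left)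
  also have "\<dots> = (\<Sum>W\<in>C. \<Sum>S\<in>Pow E. 2 * (if Pr S W then 1 else 0))" by (rule sum.swap)
  also have "\<dots> = (\<Sum>W\<in>C. 2 * card {S \<in> Pow E. Pr S W})"
  proof (rule sum.cong[OF refl])
    fix W show "(\<Sum>S\<in>Pow E. 2 * (if Pr S W then 1 else 0)) = 2 * card {S \<in> Pow E. Pr S W}"
      by (subst card_filter_sum) (use finE in \<open>simp_all add: sum_distrib_left\<close>)
  qed
  also have "\<dots> = (\<Sum>W\<in>C. 2 ^ card E)" using half by simp
  also have "\<dots> = card C * 2 ^ card E" by simp
  also have "\<dots> = (\<Sum>S\<in>Pow E. card C)" using finE by (simp add: card_Pow)
  finally have eq: "(\<Sum>S\<in>Pow E. 2 * card {W \<in> C. Pr S W}) = (\<Sum>S\<in>Pow E. card C)" .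
  have "{W \<in> C. Pr {} W} = C" using emp by auto
  then have "card C < 2 * card {W \<in> C. Pr {} W}" using ne finC by (simp add: card_gt_0_iff)
  then have "(\<Sum>S\<in>Pow E. card C) < (\<Sum>S\<in>Pow E. 2 * card {W \<in> C. Pr S W})"
    using ge finE by (intro sum_strict_mono_ex1) auto
  then show False using eq by simp
qed

lemma exists_good:
  assumes sg: "simple_graph V E" and g: "g \<ge> 1" and ns: "noshort V E (g - 1)" and ne: "CW V E g \<noteq> {}"
  shows "\<exists>S \<subseteq> E. card (CW (enc ` (V \<times> UNIV)) (liftE E S) g) < card (CW V E g)"
proof -
  let ?C = "CW V E g"
  have finV: "finite V" using sg_fin[OF sg] .
  have finE: "finite E"
  proof -
    have "E \<subseteq> Pow V" using sg unfolding simple_graph_def by auto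
    then show ?thesis using finV by (meson finite_Pow_iff rev_finite_subset)
  qed
  have half: "2 * card {S \<in> Pow E. even (cr S W g)} = 2 ^ card E" if W: "W \<in> ?C" for W
  proof -
    have ms: "g \<ge> 3 \<and> (\<forall>j<g. {W!j, W!Suc j} = {W!0, W!1} \<longrightarrow> j = 0)" by (rule min_struct[OF sg W g ns])
    have wW: "walk E W" "length W = Suc g" using W unfolding CW_def by auto
    then have "{W!0, W!Suc 0} \<in> E" using g unfolding walk_def by auto
    then have "{W!0, W!1} \<in> E" by simp
    then show ?thesis using count_half[OF finE, of "{W!0, W!1}" "\<lambda>S. even (cr S W g)"]
      flip_parity[of g W] ms by auto
  qed
  obtain S where S: "S \<subseteq> E" "2 * card {W \<in> ?C. even (cr S W g)} < card ?C"
    using averaging[OF finE finite_CW[OF finV] ne, of "\<lambda>S W. even (cr S W g)"] half by auto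
  then show ?thesis using card_lift_le[OF finV, of E S g] by (intro exI[of _ S]) auto
qed

definition goodS :: "('a \<times> bool list) set \<Rightarrow> ('a \<times> bool list) set set \<Rightarrow> ('a \<times> bool list) set set \<Rightarrow> bool" where
  "goodS V E S = (S \<subseteq> E \<and> (\<forall>g. 1 \<le> g \<and> noshort V E (g - 1) \<and> CW V E g \<noteq> {} \<longrightarrow>
      card (CW (enc ` (V \<times> UNIV)) (liftE E S) g) < card (CW V E g)))"

lemma goodS_ex:
  assumes sg: "simple_graph V E"
  shows "\<exists>S. goodS V E S"
proof (cases "\<exists>g. 1 \<le> g \<and> noshort V E (g - 1) \<and> CW V E g \<noteq> {}")
  case False then show ?thesis unfolding goodS_def by blast
next
  case True
  then obtain g0 where g0: "1 \<le> g0" "noshort V E (g0 - 1)" "CW V E g0 \<noteq> {}" by blast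
  obtain S where S: "S \<subseteq> E" "card (CW (enc ` (V \<times> UNIV)) (liftE E S) g0) < card (CW V E g0)"
    using exists_good[OF sg g0] by blast
  have uniq: "g = g0" if g: "1 \<le> g" "noshort V E (g - 1)" "CW V E g \<noteq> {}" for g
  proof (rule ccontr)
    assume "g \<noteq> g0"
    then consider "g < g0" | "g0 < g" by linarith
    then show False
    proof cases
      case 1 then show False using g0(2) g unfolding noshort_def by auto
    next
      case 2 then show False using g(2) g0 unfolding noshort_def by auto
    qed
  qed
  show ?thesis unfolding goodS_def using S uniq by blast
qed

definition chooseS :: "('a \<times> bool list) set \<Rightarrow> ('a \<times> bool list) set set \<Rightarrow> ('a \<times> bool list) set set" where
  "chooseS V E = (SOME S. goodS V E S)"

lemma chooseS: "simple_graph V E \<Longrightarrow> goodS V E (chooseS V E)"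
  unfolding chooseS_def using goodS_ex by (metis someI_ex)

definition emb :: "'a \<Rightarrow> 'a \<times> bool list" where "emb v = (v, [])"

fun gseq :: "'a set \<Rightarrow> 'a set set \<Rightarrow> nat \<Rightarrow> ('a \<times> bool list) set \<times> ('a \<times> bool list) set set" where
  "gseq V E 0 = (emb ` V, (\<lambda>e. emb ` e) ` E)"
| "gseq V E (Suc i) = (enc ` (fst (gseq V E i) \<times> UNIV),
     liftE (snd (gseq V E i)) (chooseS (fst (gseq V E i)) (snd (gseq V E i))))"

fun lset :: "'a set \<Rightarrow> nat \<Rightarrow> ('a \<times> bool list) set" where
  "lset P 0 = emb ` P"
| "lset P (Suc i) = enc ` (lset P i \<times> UNIV)"

lemma inj_emb: "inj emb" unfolding emb_def by (rule injI) simp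

lemma nbr_img:
  assumes "inj f"
  shows "nbr ((\<lambda>e. f ` e) ` E) (f x) = f ` nbr E x"
proof
  show "nbr ((\<lambda>e. f ` e) ` E) (f x) \<subseteq> f ` nbr E x"
  proof
    fix z assume "z \<in> nbr ((\<lambda>e. f ` e) ` E) (f x)"
    then obtain e where e: "e \<in> E" "{f x, z} = f ` e" unfolding nbr_def by auto
    then obtain y where y: "y \<in> e" "z = f y" by (metis imageE insertI1 insert_commute)
    have "f ` e = f ` {x, y}" using e y by simp
    then have "e = {x,y}" using inj_image_eq_iff[OF assms] by metis
    then show "z \<in> f ` nbr E x" using e y unfolding nbr_def by auto
  qed
next
  show "f ` nbr E x \<subseteq> nbr ((\<lambda>e. f ` e) ` E) (f x)"
  proof
    fix z assume "z \<in> f ` nbr E x"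
    then obtain y where "{x,y} \<in> E" "z = f y" unfolding nbr_def by auto
    then show "z \<in> nbr ((\<lambda>e. f ` e) ` E) (f x)" unfolding nbr_def by (auto intro: rev_image_eqI)
  qed
qed

lemma sg_img:
  assumes sg: "simple_graph V E" and inj: "inj f"
  shows "simple_graph (f ` V) ((\<lambda>e. f ` e) ` E)"
  unfolding simple_graph_def
proof (intro conjI ballI)
  show "finite (f ` V)" using sg_fin[OF sg] by simp
next
  fix e assume "e \<in> (\<lambda>e. f ` e) ` E"
  then obtain e0 where e0: "e0 \<in> E" "e = f ` e0" by blast
  then obtain u v where "u \<in> V" "v \<in> V" "u \<noteq> v" "e0 = {u,v}" using sg unfolding simple_graph_def by blast
  then show "\<exists>u v. u \<in> f ` V \<and> v \<in> f ` V \<and> u \<noteq> v \<and> e = {u, v}"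
    using e0 inj by (intro exI[of _ "f u"] exI[of _ "f v"]) (auto simp: inj_eq)
qed

locale core =
  fixes V :: "'a set" and E :: "'a set set" and P Q :: "'a set" and p q :: nat
  assumes sg: "simple_graph V E"
    and PQ: "P \<union> Q = V"
    and Pd: "\<And>x. x \<in> P \<Longrightarrow> card (nbr E x) = p \<and> nbr E x \<subseteq> Q"
    and Qd: "\<And>x. x \<in> Q \<Longrightarrow> card (nbr E x) = q \<and> nbr E x \<subseteq> P"
begin

abbreviation Vs :: "nat \<Rightarrow> ('a \<times> bool list) set" where "Vs i \<equiv> fst (gseq V E i)"
abbreviation Es :: "nat \<Rightarrow> ('a \<times> bool list) set set" where "Es i \<equiv> snd (gseq V E i)"

lemma invs: "simple_graph (Vs i) (Es i) \<and> Vs i = lset P i \<union> lset Q i \<and>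
   (\<forall>x\<in>lset P i. card (nbr (Es i) x) = p \<and> nbr (Es i) x \<subseteq> lset Q i) \<and>
   (\<forall>x\<in>lset Q i. card (nbr (Es i) x) = q \<and> nbr (Es i) x \<subseteq> lset P i)"
proof (induction i)
  case 0
  have "simple_graph (Vs 0) (Es 0)" using sg_img[OF sg inj_emb] by simp
  moreover have "Vs 0 = lset P 0 \<union> lset Q 0" using PQ by auto
  moreover have "\<forall>x\<in>lset P 0. card (nbr (Es 0) x) = p \<and> nbr (Es 0) x \<subseteq> lset Q 0"
  proof
    fix x assume "x \<in> lset P 0"
    then obtain y where y: "y \<in> P" "x = emb y" by auto
    then have "nbr (Es 0) x = emb ` nbr E y" using nbr_img[OF inj_emb] by simp
    then show "card (nbr (Es 0) x) = p \<and> nbr (Es 0) x \<subseteq> lset Q 0"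
      using Pd[OF y(1)] card_image[OF inj_on_subset[OF inj_emb]] by auto
  qed
  moreover have "\<forall>x\<in>lset Q 0. card (nbr (Es 0) x) = q \<and> nbr (Es 0) x \<subseteq> lset P 0"
  proof
    fix x assume "x \<in> lset Q 0"
    then obtain y where y: "y \<in> Q" "x = emb y" by auto
    then have "nbr (Es 0) x = emb ` nbr E y" using nbr_img[OF inj_emb] by simp
    then show "card (nbr (Es 0) x) = q \<and> nbr (Es 0) x \<subseteq> lset P 0"
      using Qd[OF y(1)] card_image[OF inj_on_subset[OF inj_emb]] by auto
  qed
  ultimately show ?case by blast
next
  case (Suc i)
  let ?S = "chooseS (Vs i) (Es i)"
  have sgi: "simple_graph (Vs i) (Es i)" using Suc.IH by blast
  have "simple_graph (enc ` (Vs i \<times> UNIV)) (liftE (Es i) ?S)" by (rule sg_lift[OF sgi])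
  then have sgS: "simple_graph (Vs (Suc i)) (Es (Suc i))" by (simp only: gseq.simps fst_conv snd_conv)
  moreover have "Vs (Suc i) = lset P (Suc i) \<union> lset Q (Suc i)" using Suc by auto
  moreover have "\<forall>x\<in>lset P (Suc i). card (nbr (Es (Suc i)) x) = p \<and> nbr (Es (Suc i)) x \<subseteq> lset Q (Suc i)"
  proof
    fix x assume "x \<in> lset P (Suc i)"
    then obtain y b where y: "y \<in> lset P i" "x = enc (y, b)" by auto
    have n: "nbr (Es (Suc i)) x = (\<lambda>z. enc (z, b \<noteq> ({y,z} \<in> ?S))) ` nbr (Es i) y"
      using y nbr_lift by simp
    have c: "card (nbr (Es (Suc i)) x) = card (nbr (Es i) y)" using y card_nbr_lift by simp
    have IH: "card (nbr (Es i) y) = p" "nbr (Es i) y \<subseteq> lset Q i" using Suc.IH y(1) by blast+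
    have "nbr (Es (Suc i)) x \<subseteq> enc ` (lset Q i \<times> UNIV)" unfolding n using IH(2) by auto
    then show "card (nbr (Es (Suc i)) x) = p \<and> nbr (Es (Suc i)) x \<subseteq> lset Q (Suc i)"
      using c IH(1) by simp
  qed
  moreover have "\<forall>x\<in>lset Q (Suc i). card (nbr (Es (Suc i)) x) = q \<and> nbr (Es (Suc i)) x \<subseteq> lset P (Suc i)"
  proof
    fix x assume "x \<in> lset Q (Suc i)"
    then obtain y b where y: "y \<in> lset Q i" "x = enc (y, b)" by auto
    have n: "nbr (Es (Suc i)) x = (\<lambda>z. enc (z, b \<noteq> ({y,z} \<in> ?S))) ` nbr (Es i) y"
      using y nbr_lift by simp
    have c: "card (nbr (Es (Suc i)) x) = card (nbr (Es i) y)" using y card_nbr_lift by simp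
    have IH: "card (nbr (Es i) y) = q" "nbr (Es i) y \<subseteq> lset P i" using Suc.IH y(1) by blast+
    have "nbr (Es (Suc i)) x \<subseteq> enc ` (lset P i \<times> UNIV)" unfolding n using IH(2) by auto
    then show "card (nbr (Es (Suc i)) x) = q \<and> nbr (Es (Suc i)) x \<subseteq> lset P (Suc i)"
      using c IH(1) by simp
  qed
  ultimately show ?case by blast
qed

lemma lseq: "lift_sequence V E Vs Es"
  unfolding lift_sequence_def
proof (intro conjI allI)
  show "Vs 0 = (\<lambda>v. (v, [])) ` V" by (simp add: emb_def)
  show "Es 0 = (\<lambda>e. (\<lambda>v. (v, [])) ` e) ` E" by (simp add: emb_def)
next
  fix i
  show "lift_step (Vs i) (Es i) (Vs (Suc i)) (Es (Suc i))"
    unfolding lift_step_def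
    by (intro conjI exI[of _ "Hraw (Es i) (chooseS (Vs i) (Es i))"]) (simp_all add: two_lift_Hraw liftE_img)
qed

lemma ns_step:
  assumes ns: "noshort (Vs i) (Es i) L" and ne: "CW (Vs i) (Es i) (Suc L) \<noteq> {}"
  shows "card (CW (Vs (Suc i)) (Es (Suc i)) (Suc L)) < card (CW (Vs i) (Es i) (Suc L))"
proof -
  have "goodS (Vs i) (Es i) (chooseS (Vs i) (Es i))" using chooseS invs by blast
  then show ?thesis using ns ne unfolding goodS_def by simp
qed

lemma ns_persist: "noshort (Vs i) (Es i) L \<Longrightarrow> noshort (Vs (i + k)) (Es (i + k)) L"
  by (induction k) (auto simp: noshort_lift)

lemma ns_event: "\<exists>N. noshort (Vs N) (Es N) L"
proof (induction L)
  case 0 then show ?case unfolding noshort_def by auto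
next
  case (Suc L)
  then obtain N where N: "noshort (Vs N) (Es N) L" by blast
  have "\<forall>i. noshort (Vs i) (Es i) L \<and> card (CW (Vs i) (Es i) (Suc L)) \<le> c \<longrightarrow>
        (\<exists>j. noshort (Vs j) (Es j) (Suc L))" for c
  proof (induction c)
    case 0
    show ?case
    proof (intro allI impI)
      fix i assume a: "noshort (Vs i) (Es i) L \<and> card (CW (Vs i) (Es i) (Suc L)) \<le> 0"
      have "finite (CW (Vs i) (Es i) (Suc L))" using finite_CW sg_fin invs by blast
      then have "CW (Vs i) (Es i) (Suc L) = {}" using a by simp
      then have "noshort (Vs i) (Es i) (Suc L)" using a unfolding noshort_def by (auto simp: le_Suc_eq)
      then show "\<exists>j. noshort (Vs j) (Es j) (Suc L)" by blast
    qed
  next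
    case (Suc c)
    show ?case
    proof (intro allI impI)
      fix i assume a: "noshort (Vs i) (Es i) L \<and> card (CW (Vs i) (Es i) (Suc L)) \<le> Suc c"
      show "\<exists>j. noshort (Vs j) (Es j) (Suc L)"
      proof (cases "CW (Vs i) (Es i) (Suc L) = {}")
        case True
        then have "noshort (Vs i) (Es i) (Suc L)" using a unfolding noshort_def by (auto simp: le_Suc_eq)
        then show ?thesis by blast
      next
        case False
        then have "card (CW (Vs (Suc i)) (Es (Suc i)) (Suc L)) \<le> c" using ns_step a by fastforce
        moreover have "noshort (Vs (Suc i)) (Es (Suc i)) L" using ns_persist[of i L 1] a by simp
        ultimately show ?thesis using Suc.IH by blast
      qed
    qed
  qed
  then show ?case using N by blast
qed

lemma event_iso:
  "\<exists>N. \<forall>i\<ge>N. \<forall>v\<in>Vs i.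
     (v \<in> lset P i \<longrightarrow> degree (Es i) v = p \<and> ball_iso_tree (Es i) v r p q) \<and>
     (v \<in> lset Q i \<longrightarrow> degree (Es i) v = q \<and> ball_iso_tree (Es i) v r q p)"
proof -
  obtain N where N: "noshort (Vs N) (Es N) (2 * r + 1)" using ns_event by blast
  have "\<forall>v\<in>Vs i.
     (v \<in> lset P i \<longrightarrow> degree (Es i) v = p \<and> ball_iso_tree (Es i) v r p q) \<and>
     (v \<in> lset Q i \<longrightarrow> degree (Es i) v = q \<and> ball_iso_tree (Es i) v r q p)" if i: "i \<ge> N" for i
  proof (intro ballI conjI impI)
    have ns: "noshort (Vs i) (Es i) (2 * r + 1)" using ns_persist[OF N, of "i - N"] i by simp
    note I = invs[of i]
    fix v assume v: "v \<in> Vs i"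
    {
      assume vP: "v \<in> lset P i"
      interpret T: tloc "Vs i" "Es i" "lset P i" "lset Q i" p q v
        using I vP by unfold_locales auto
      show "degree (Es i) v = p" using degree_nbr[OF T.sg] I vP by simp
      show "ball_iso_tree (Es i) v r p q" by (rule T.ball_iso[OF ns])
    }
    {
      assume vQ: "v \<in> lset Q i"
      interpret T: tloc "Vs i" "Es i" "lset Q i" "lset P i" q p v
        using I vQ by unfold_locales auto
      show "degree (Es i) v = q" using degree_nbr[OF T.sg] I vQ by simp
      show "ball_iso_tree (Es i) v r q p" by (rule T.ball_iso[OF ns])
    }
  qed
  then show ?thesis by blast
qed

lemma Vs_ne: "V \<noteq> {} \<Longrightarrow> Vs i \<noteq> {}"
  by (induction i) auto

lemma Vs_fin: "finite (Vs i)" using invs sg_fin by blast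

end

lemma ratio_one:
  fixes Vs :: "nat \<Rightarrow> 'v set"
  assumes ev: "\<exists>N. \<forall>i\<ge>N. {v \<in> Vs i. R i v} = Vs i"
    and fin: "\<And>i. finite (Vs i)" and ne: "\<And>i. Vs i \<noteq> {}"
  shows "(\<lambda>i. real (card {v \<in> Vs i. R i v}) / real (card (Vs i))) \<longlonglongrightarrow> 1"
proof (rule tendsto_eventually)
  obtain N where N: "\<forall>i\<ge>N. {v \<in> Vs i. R i v} = Vs i" using ev by blast
  show "\<forall>\<^sub>F i in sequentially. real (card {v \<in> Vs i. R i v}) / real (card (Vs i)) = 1"
    unfolding eventually_sequentially
  proof (intro exI[of _ N] allI impI)
    fix i assume "N \<le> i"
    then have "{v \<in> Vs i. R i v} = Vs i" using N by blast
    moreover have "card (Vs i) > 0" using fin ne by (simp add: card_gt_0_iff)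
    ultimately show "real (card {v \<in> Vs i. R i v}) / real (card (Vs i)) = 1" by simp
  qed
qed

theorem corollary4p5:
  shows "(\<forall>(V :: 'a set) E d. regular_graph V E d \<and> V \<noteq> {} \<longrightarrow>
            (\<exists>Vs Es. lift_sequence V E Vs Es \<and> BS_conv_regular Vs Es d))
       \<and> (\<forall>(V :: 'b set) E a b. biregular_bipartite V E a b \<and> V \<noteq> {} \<longrightarrow>
            (\<exists>Vs Es. lift_sequence V E Vs Es \<and> BS_conv_biregular Vs Es a b))"
proof (intro conjI allI impI)
  fix V :: "'a set" and E d assume a: "regular_graph V E d \<and> V \<noteq> {}"
  then have sg: "simple_graph V E" and deg: "\<And>x. x \<in> V \<Longrightarrow> degree E x = d" and ne: "V \<noteq> {}"
    unfolding regular_graph_def by auto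
  interpret C: core V E V V d d
    using sg deg degree_nbr[OF sg] sg_nbr_sub[OF sg] by unfold_locales auto
  have "BS_conv_regular C.Vs C.Es d" unfolding BS_conv_regular_def
  proof (intro allI impI)
    fix r :: nat assume "r \<ge> 1"
    obtain N where N: "\<forall>i\<ge>N. \<forall>v\<in>C.Vs i.
     (v \<in> lset V i \<longrightarrow> degree (C.Es i) v = d \<and> ball_iso_tree (C.Es i) v r d d) \<and>
     (v \<in> lset V i \<longrightarrow> degree (C.Es i) v = d \<and> ball_iso_tree (C.Es i) v r d d)"
      using C.event_iso[of r] by blast
    have "\<forall>i\<ge>N. {v \<in> C.Vs i. ball_iso_tree (C.Es i) v r d d} = C.Vs i"
      using N C.invs by blast
    then show "(\<lambda>i. real (card {v \<in> C.Vs i. ball_iso_tree (C.Es i) v r d d}) / real (card (C.Vs i))) \<longlonglongrightarrow> 1"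
      using ratio_one[of C.Vs "\<lambda>i v. ball_iso_tree (C.Es i) v r d d"] C.Vs_fin C.Vs_ne[OF ne] by blast
  qed
  then show "\<exists>Vs Es. lift_sequence V E Vs Es \<and> BS_conv_regular Vs Es d" using C.lseq by blast
next
  fix V :: "'b set" and E a b assume h: "biregular_bipartite V E a b \<and> V \<noteq> {}"
  then have sg: "simple_graph V E" and ne: "V \<noteq> {}" unfolding biregular_bipartite_def by auto
  from h obtain A B where AB: "A \<union> B = V" "A \<inter> B = {}" "\<forall>e\<in>E. \<exists>u\<in>A. \<exists>w\<in>B. e = {u, w}"
    "\<forall>v\<in>A. degree E v = a" "\<forall>v\<in>B. degree E v = b" unfolding biregular_bipartite_def by blast
  have nA: "nbr E x \<subseteq> B" if x: "x \<in> A" for x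
  proof
    fix y assume "y \<in> nbr E x"
    then have "{x,y} \<in> E" unfolding nbr_def by simp
    then obtain u w where "u \<in> A" "w \<in> B" "{x,y} = {u,w}" using AB(3) by blast
    then show "y \<in> B" using x AB(2) by (auto simp: doubleton_eq_iff)
  qed
  have nB: "nbr E x \<subseteq> A" if x: "x \<in> B" for x
  proof
    fix y assume "y \<in> nbr E x"
    then have "{x,y} \<in> E" unfolding nbr_def by simp
    then obtain u w where "u \<in> A" "w \<in> B" "{x,y} = {u,w}" using AB(3) by blast
    then show "y \<in> A" using x AB(2) by (auto simp: doubleton_eq_iff)
  qed
  interpret C: core V E A B a b
    using sg AB degree_nbr[OF sg] nA nB by unfold_locales auto
  have "BS_conv_biregular C.Vs C.Es a b" unfolding BS_conv_biregular_def
  proof (intro allI impI)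
    fix r :: nat assume "r \<ge> 1"
    obtain N where N: "\<forall>i\<ge>N. \<forall>v\<in>C.Vs i.
     (v \<in> lset A i \<longrightarrow> degree (C.Es i) v = a \<and> ball_iso_tree (C.Es i) v r a b) \<and>
     (v \<in> lset B i \<longrightarrow> degree (C.Es i) v = b \<and> ball_iso_tree (C.Es i) v r b a)"
      using C.event_iso[of r] by blast
    let ?R = "\<lambda>i v. (degree (C.Es i) v = a \<and> ball_iso_tree (C.Es i) v r a b) \<or>
             (degree (C.Es i) v = b \<and> ball_iso_tree (C.Es i) v r b a)"
    have "\<forall>i\<ge>N. {v \<in> C.Vs i. ?R i v} = C.Vs i"
    proof (intro allI impI)
      fix i assume i: "i \<ge> N"
      have "C.Vs i = lset A i \<union> lset B i" using C.invs by blast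
      then show "{v \<in> C.Vs i. ?R i v} = C.Vs i" using N i by blast
    qed
    then show "(\<lambda>i. real (card {v \<in> C.Vs i. ?R i v}) / real (card (C.Vs i))) \<longlonglongrightarrow> 1"
      using ratio_one[of C.Vs ?R] C.Vs_fin C.Vs_ne[OF ne] by blast
  qed
  then show "\<exists>Vs Es. lift_sequence V E Vs Es \<and> BS_conv_biregular Vs Es a b" using C.lseq by blast
qed

end
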